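(* Fix a received sequence $\mathbf y=(y_1,\dots,y_n)$ and let $g^*$ be any minimizer of $\sum_{e\in\mathcal E} g(e)\,b(e)$ over $g\in\mathcal P_{\mathcal T}(H)$ (the output of the LP joint decoder). If $g^*$ is integral, i.e. $g^*\in\{0,1\}^{|\mathcal E|}$, then $g^*$ is the indicator vector of an edge-path $(e_1,\dots,e_n)$ whose input sequence $x_1^n=(x(e_1),\dots,x(e_n))$ is a codeword of $\mathcal C$, and the corresponding input/state pair $(x_1^n,s_1^{n+1})$, with $s_i=s(e_i)$ for $i\le n$ and $s_{n+1}=s'(e_n)$, maximizes $P(y_1^n,s_2^{n+1}\mid x_1^n,s_1)\,P(s_1)$ over all input/state sequence pairs $(x_1^n,s_1^{n+1})\in\{0,1\}^n\times\mathcal S^{n+1}$ with $x_1^n\in\mathcal C$ (i.e. $g^*$ is a joint maximum-likelihood edge-path).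
   Context: Let $\mathcal C\subseteq\{0,1\}^n$ be a binary linear code with parity-check matrix $H$, and let $\mathcal I$ be the collection of sets of column indices participating in each row (parity check) of $H$. For $I\in\mathcal I$ define the local codeword polytope $\mathrm{LCP}(I)=\bigcap_{S\subseteq I,\ |S|\text{ odd}}\{\mathbf f\in[0,1]^n:\sum_{i\in S}f_i-\sum_{i\in I\setminus S}f_i\le |S|-1\}$ and the relaxed polytope $\mathcal P(H)=\bigcap_{I\in\mathcal I}\mathrm{LCP}(I)$. A finite-state channel (FSC) with binary inputs $x\in\{0,1\}$, finite state set $\mathcal S$ and output alphabet $\mathcal Y$ is specified by transition probabilities (or densities in $y$) $P(y,s'\mid x,s)=\Pr(Y_i=y,S_{i+1}=s'\mid X_i=x,S_i=s)$, the same for all $i$, together with an initial state distribution $P(s_1)$; one writes $P(y_1^n,s_2^{n+1}\mid x_1^n,s_1)=\prod_{i=1}^nP(y_i,s_{i+1}\mid x_i,s_i)$. Trellis: given the received $\mathbf y$, the edge set $\mathcal E$ consists of the tuples $e=(i,s,s',x)$ with $i\in\{1,\dots,n\}$, $s,s'\in\mathcal S$, $x\in\{0,1\}$, such that $P(y_i,s'\mid x,s)>0$ (and additionally $P(s)>0$ if $i=1$); write $t(e)=i$, $s(e)=s$, $s'(e)=s'$, $x(e)=x$. The branch metric is $b(e)=-\ln P(y_{t(e)},s'(e)\mid x(e),s(e))$ if $t(e)>1$ and $b(e)=-\ln\big(P(y_1,s'(e)\mid x(e),s(e))P(s(e))\big)$ if $t(e)=1$. An edge-path is a sequence $(e_1,\dots,e_n)$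 of edges with $t(e_i)=i$ and $s'(e_i)=s(e_{i+1})$; it is identified with its indicator vector in $\{0,1\}^{|\mathcal E|}$. The trellis polytope $\mathcal T$ is the set of $g:\mathcal E\to[0,1]$ with $\sum_{e:\,t(e)=1}g(e)=1$ and, for every $i=1,\dots,n-1$ and $j\in\mathcal S$, $\sum_{e:\,t(e)=i,\,s'(e)=j}g(e)=\sum_{e:\,t(e)=i+1,\,s(e)=j}g(e)$. The projection $\mathcal Q$ maps $g$ to $\mathbf f=\mathcal Qg\in[0,1]^n$ with $f_i=\sum_{e:\,t(e)=i,\,x(e)=1}g(e)$. The trellis-wise relaxed polytope is $\mathcal P_{\mathcal T}(H)=\{g\in\mathcal T:\mathcal Qg\in\mathcal P(H)\}$. *)

theory Defs
  imports Complex_Main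
begin

text \<open>Binary parity-check matrix with m rows and n columns; columns indexed 1..n,
  rows indexed 0..m-1. Entry True means 1.\<close>

definition checks :: "(nat \<Rightarrow> nat \<Rightarrow> bool) \<Rightarrow> nat \<Rightarrow> nat \<Rightarrow> nat set set" where
  "checks H m n = (\<lambda>j. {i \<in> {1..n}. H j i}) ` {..<m}"

definition code :: "(nat \<Rightarrow> nat \<Rightarrow> bool) \<Rightarrow> nat \<Rightarrow> nat \<Rightarrow> (nat \<Rightarrow> bool) set" where
  "code H m n = {x. \<forall>I \<in> checks H m n. even (card {i \<in> I. x i})}"

definition LCP :: "nat \<Rightarrow> nat set \<Rightarrow> (nat \<Rightarrow> real) set" where
  "LCP n I = {f. (\<forall>i\<in>{1..n}. 0 \<le> f i \<and> f i \<le> 1) \<and>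
      (\<forall>S. S \<subseteq> I \<longrightarrow> odd (card S) \<longrightarrow>
          (\<Sum>i\<in>S. f i) - (\<Sum>i\<in>I - S. f i) \<le> real (card S) - 1)}"

definition relaxed_polytope :: "(nat \<Rightarrow> nat \<Rightarrow> bool) \<Rightarrow> nat \<Rightarrow> nat \<Rightarrow> (nat \<Rightarrow> real) set" where
  "relaxed_polytope H m n =
     {f. \<forall>i\<in>{1..n}. 0 \<le> f i \<and> f i \<le> 1} \<inter> (\<Inter>I \<in> checks H m n. LCP n I)"

text \<open>Trellis edges e = (i, s, s', x).\<close>
type_synonym 's edge = "nat \<times> 's \<times> 's \<times> bool"

definition etime :: "'s edge \<Rightarrow> nat" where "etime e = fst e"
definition estart :: "'s edge \<Rightarrow> 's" where "estart e = fst (snd e)"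
definition eend :: "'s edge \<Rightarrow> 's" where "eend e = fst (snd (snd e))"
definition einput :: "'s edge \<Rightarrow> bool" where "einput e = snd (snd (snd e))"

text \<open>Channel law: Pch y s' x s = P(y, s' | x, s); initial distribution P0.\<close>
definition trellis_edges ::
  "('y \<Rightarrow> 's \<Rightarrow> bool \<Rightarrow> 's \<Rightarrow> real) \<Rightarrow> ('s \<Rightarrow> real) \<Rightarrow> nat \<Rightarrow> (nat \<Rightarrow> 'y) \<Rightarrow> 's edge set" where
  "trellis_edges Pch P0 n y =
     {(i, s, s', x). i \<in> {1..n} \<and> Pch (y i) s' x s > 0 \<and> (i = 1 \<longrightarrow> P0 s > 0)}"

definition branch_metric ::
  "('y \<Rightarrow> 's \<Rightarrow> bool \<Rightarrow> 's \<Rightarrow> real) \<Rightarrow> ('s \<Rightarrow> real) \<Rightarrow> (nat \<Rightarrow> 'y) \<Rightarrow> 's edge \<Rightarrow> real" where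
  "branch_metric Pch P0 y e =
     (if etime e > 1 then - ln (Pch (y (etime e)) (eend e) (einput e) (estart e))
      else - ln (Pch (y (etime e)) (eend e) (einput e) (estart e) * P0 (estart e)))"

text \<open>Trellis polytope; g is a vector indexed by E, represented as a function
  vanishing outside E.\<close>
definition trellis_polytope :: "'s edge set \<Rightarrow> nat \<Rightarrow> ('s edge \<Rightarrow> real) set" where
  "trellis_polytope E n = {g.
     (\<forall>e. e \<notin> E \<longrightarrow> g e = 0) \<and>
     (\<forall>e\<in>E. 0 \<le> g e \<and> g e \<le> 1) \<and>
     (\<Sum>e\<in>{e\<in>E. etime e = 1}. g e) = 1 \<and>
     (\<forall>i\<in>{1..n-1}. \<forall>j.
        (\<Sum>e\<in>{e\<in>E. etime e = i \<and> eend e = j}. g e) =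
        (\<Sum>e\<in>{e\<in>E. etime e = i + 1 \<and> estart e = j}. g e))}"

definition projQ :: "'s edge set \<Rightarrow> ('s edge \<Rightarrow> real) \<Rightarrow> nat \<Rightarrow> real" where
  "projQ E g i = (\<Sum>e\<in>{e\<in>E. etime e = i \<and> einput e}. g e)"

definition trellis_relaxed_polytope ::
  "(nat \<Rightarrow> nat \<Rightarrow> bool) \<Rightarrow> nat \<Rightarrow> nat \<Rightarrow> 's edge set \<Rightarrow> ('s edge \<Rightarrow> real) set" where
  "trellis_relaxed_polytope H m n E =
     {g \<in> trellis_polytope E n. projQ E g \<in> relaxed_polytope H m n}"

definition is_edge_path :: "'s edge set \<Rightarrow> nat \<Rightarrow> (nat \<Rightarrow> 's edge) \<Rightarrow> bool" where
  "is_edge_path E n es \<longleftrightarrow>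
     (\<forall>i\<in>{1..n}. es i \<in> E \<and> etime (es i) = i) \<and>
     (\<forall>i\<in>{1..n-1}. eend (es i) = estart (es (i + 1)))"

definition joint_likelihood ::
  "('y \<Rightarrow> 's \<Rightarrow> bool \<Rightarrow> 's \<Rightarrow> real) \<Rightarrow> ('s \<Rightarrow> real) \<Rightarrow> nat \<Rightarrow> (nat \<Rightarrow> 'y)
    \<Rightarrow> (nat \<Rightarrow> bool) \<Rightarrow> (nat \<Rightarrow> 's) \<Rightarrow> real" where
  "joint_likelihood Pch P0 n y x ss =
     (\<Prod>i=1..n. Pch (y i) (ss (i + 1)) (x i) (ss i)) * P0 (ss 1)"

end

theory Submission imports Defs begin

lemma memE: "e \<in> trellis_edges Pch P0 n y \<longleftrightarrow> etime e \<in> {1..n} \<and> 0 < Pch (y (etime e)) (eend e) (einput e) (estart e) \<and> (etime e = 1 \<longrightarrow> 0 < P0 (estart e))"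
  by (cases e) (auto simp: trellis_edges_def etime_def eend_def einput_def estart_def)

lemma finE: "finite (trellis_edges Pch P0 n y :: ('s::finite) edge set)"
  by (rule finite_subset[of _ "{1..n} \<times> UNIV"]) (auto simp: trellis_edges_def)

lemma sum_bool: "finite S \<Longrightarrow> (\<Sum>i\<in>S. if x i then 1 else 0 :: real) = real (card {i\<in>S. x i})"
  by (simp add: sum.If_cases Int_def conj_commute)

lemma sum01: assumes "finite A" "\<forall>e\<in>A. g e \<in> {0,1::real}"
  shows "sum g A = real (card {e\<in>A. g e = 1})"
proof -
  have "sum g A = (\<Sum>e\<in>A. if g e = 1 then 1 else 0)"
    using assms(2) by (intro sum.cong) auto
  then show ?thesis using sum_bool[OF assms(1), of "\<lambda>e. g e = 1"] by simp
qed

lemma checks_sub: "I \<in> checks H m n \<Longrightarrow> I \<subseteq> {1..n}"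
  by (auto simp: checks_def)

lemma code_relaxed:
  assumes x: "x \<in> code H m n" and f: "\<forall>i\<in>{1..n}. f i = (if x i then 1 else 0)"
  shows "f \<in> relaxed_polytope H m n"
proof -
  have b: "\<forall>i\<in>{1..n}. 0 \<le> f i \<and> f i \<le> 1" using f by auto
  have "f \<in> LCP n I" if I: "I \<in> checks H m n" for I
  proof -
    have Isub: "I \<subseteq> {1..n}" using checks_sub[OF I] .
    have finI: "finite I" using Isub finite_subset by blast
    have ev: "even (card {i\<in>I. x i})" using x I by (auto simp: code_def)
    have "(\<Sum>i\<in>S. f i) - (\<Sum>i\<in>I - S. f i) \<le> real (card S) - 1"
      if S: "S \<subseteq> I" "odd (card S)" for S
    proof -
      have finS: "finite S" using S finI finite_subset by blast
      have sS: "(\<Sum>i\<in>S. f i) = real (card {i\<in>S. x i})"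
      proof -
        have "(\<Sum>i\<in>S. f i) = (\<Sum>i\<in>S. if x i then 1 else 0)" using f S Isub by (intro sum.cong) auto
        then show ?thesis using sum_bool[OF finS, of x] by simp
      qed
      have sIS: "(\<Sum>i\<in>I-S. f i) = real (card {i\<in>I-S. x i})"
      proof -
        have "(\<Sum>i\<in>I-S. f i) = (\<Sum>i\<in>I-S. if x i then 1 else 0)" using f Isub by (intro sum.cong) auto
        then show ?thesis using sum_bool[of "I-S" x] finI by simp
      qed
      have le: "card {i\<in>S. x i} \<le> card S" using finS by (intro card_mono) auto
      show ?thesis
      proof (cases "card {i\<in>S. x i} = card S")
        case True
        then have SS: "{i\<in>S. x i} = S" using finS by (intro card_subset_eq) auto
        have "{i\<in>I. x i} \<noteq> S" using ev S(2) by auto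
        moreover have "S \<subseteq> {i\<in>I. x i}" using SS S(1) by auto
        ultimately obtain k where "k \<in> I - S" "x k" by blast
        then have "{i\<in>I-S. x i} \<noteq> {}" by blast
        moreover have "finite {i\<in>I-S. x i}" using finI by simp
        ultimately have "card {i\<in>I-S. x i} \<ge> 1"
          by (simp add: Suc_leI card_gt_0_iff)
        then show ?thesis using sS sIS True by simp
      next
        case False
        then show ?thesis using sS sIS le by simp
      qed
    qed
    then show ?thesis using b by (auto simp: LCP_def)
  qed
  then show ?thesis using b by (auto simp: relaxed_polytope_def)
qed

lemma relaxed_code:
  assumes r: "f \<in> relaxed_polytope H m n" and f: "\<forall>i\<in>{1..n}. f i = (if x i then 1 else 0)"
  shows "x \<in> code H m n"
proof -
  have "even (card {i\<in>I. x i})" if I: "I \<in> checks H m n" for I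
  proof (rule ccontr)
    assume od: "odd (card {i\<in>I. x i})"
    have Isub: "I \<subseteq> {1..n}" using checks_sub[OF I] .
    have finI: "finite I" using Isub finite_subset by blast
    let ?S = "{i\<in>I. x i}"
    have "f \<in> LCP n I" using r I by (auto simp: relaxed_polytope_def)
    then have ineq: "(\<Sum>i\<in>?S. f i) - (\<Sum>i\<in>I - ?S. f i) \<le> real (card ?S) - 1"
      using od by (auto simp: LCP_def)
    have "(\<Sum>i\<in>?S. f i) = (\<Sum>i\<in>?S. 1)" using f Isub by (intro sum.cong) auto
    moreover have "(\<Sum>i\<in>I - ?S. f i) = (\<Sum>i\<in>I-?S. 0)" using f Isub by (intro sum.cong) auto
    ultimately show False using ineq by simp
  qed
  then show ?thesis by (auto simp: code_def)
qed


abbreviation ind :: "(nat \<Rightarrow> 's edge) \<Rightarrow> nat \<Rightarrow> 's edge \<Rightarrow> real" where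
  "ind es n e \<equiv> (if e \<in> es ` {1..n} then 1 else 0)"

lemma ind_sum:
  assumes fin: "finite E" and p: "\<forall>i\<in>{1..n}. es i \<in> E \<and> etime (es i) = i"
  shows "(\<Sum>e\<in>E. ind es n e * h e) = (\<Sum>i=1..n. h (es i))"
proof -
  have "(\<Sum>e\<in>E. ind es n e * h e) = (\<Sum>e\<in>E. if e \<in> es ` {1..n} then h e else 0)"
    by (intro sum.cong) auto
  also have "\<dots> = (\<Sum>e\<in>E \<inter> es ` {1..n}. h e)"
    using fin by (simp add: sum.inter_restrict)
  also have "E \<inter> es ` {1..n} = es ` {1..n}" using p by auto
  also have "inj_on es {1..n}"
    using p by (intro inj_onI) (metis)
  then have "(\<Sum>e\<in>es ` {1..n}. h e) = (\<Sum>i=1..n. h (es i))"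
    by (simp add: sum.reindex)
  finally show ?thesis .
qed

lemma ind_sub:
  assumes fin: "finite E" and p: "\<forall>i\<in>{1..n}. es i \<in> E \<and> etime (es i) = i"
    and i: "i \<in> {1..n}"
  shows "(\<Sum>e\<in>{e\<in>E. etime e = i \<and> P e}. ind es n e) = (if P (es i) then 1 else 0)"
proof -
  have "(\<Sum>e\<in>{e\<in>E. etime e = i \<and> P e}. ind es n e) = real (card ({e\<in>E. etime e = i \<and> P e} \<inter> es ` {1..n}))"
    using fin by (simp add: sum.If_cases)
  also have "{e\<in>E. etime e = i \<and> P e} \<inter> es ` {1..n} = (if P (es i) then {es i} else {})"
    using p i by auto
  finally show ?thesis by simp
qed

lemma path_in_poly:
  assumes n: "1 \<le> n" and fin: "finite E" and p: "is_edge_path E n es"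
    and c: "(\<lambda>i. einput (es i)) \<in> code H m n"
  shows "ind es n \<in> trellis_relaxed_polytope H m n E"
proof -
  have pp: "\<forall>i\<in>{1..n}. es i \<in> E \<and> etime (es i) = i" using p by (simp add: is_edge_path_def)
  have t1: "(\<Sum>e\<in>{e\<in>E. etime e = 1}. ind es n e) = 1"
    using ind_sub[OF fin pp, of 1 "\<lambda>_. True"] n by simp
  have cons: "(\<Sum>e\<in>{e\<in>E. etime e = i \<and> eend e = j}. ind es n e) =
        (\<Sum>e\<in>{e\<in>E. etime e = i + 1 \<and> estart e = j}. ind es n e)" if i: "i \<in> {1..n-1}" for i j
  proof -
    have "eend (es i) = estart (es (i+1))" using p i by (simp add: is_edge_path_def)
    then show ?thesis
      using ind_sub[OF fin pp, of i "\<lambda>e. eend e = j"] ind_sub[OF fin pp, of "i+1" "\<lambda>e. estart e = j"] i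
      by auto
  qed
  have "\<forall>e. e \<notin> E \<longrightarrow> ind es n e = 0" using pp by auto
  then have tp: "ind es n \<in> trellis_polytope E n"
    unfolding trellis_polytope_def using t1 cons by auto
  have "\<forall>i\<in>{1..n}. projQ E (ind es n) i = (if einput (es i) then 1 else 0)"
    using ind_sub[OF fin pp, of _ einput] by (simp add: projQ_def)
  then have "projQ E (ind es n) \<in> relaxed_polytope H m n"
    by (intro code_relaxed[OF c]) auto
  then show ?thesis using tp by (simp add: trellis_relaxed_polytope_def)
qed

lemma lik:
  assumes n: "1 \<le> n" and p: "is_edge_path (trellis_edges Pch P0 n y) n es"
  defines "ss \<equiv> (\<lambda>i. if i \<le> n then estart (es i) else eend (es n))"
  shows "joint_likelihood Pch P0 n y (\<lambda>i. einput (es i)) ss > 0 \<and>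
    (\<Sum>i=1..n. branch_metric Pch P0 y (es i)) = - ln (joint_likelihood Pch P0 n y (\<lambda>i. einput (es i)) ss)"
proof -
  define p where "p i = Pch (y i) (eend (es i)) (einput (es i)) (estart (es i))" for i
  have pp: "\<forall>i\<in>{1..n}. es i \<in> trellis_edges Pch P0 n y \<and> etime (es i) = i" using p by (simp add: is_edge_path_def)
  have ppos: "p i > 0" if "i \<in> {1..n}" for i
    using pp that memE[of "es i" Pch P0 n y] by (auto simp: p_def)
  have P0pos: "P0 (estart (es 1)) > 0"
    using pp n memE[of "es 1" Pch P0 n y] by auto
  have "joint_likelihood Pch P0 n y (\<lambda>i. einput (es i)) ss = (\<Prod>i=1..n. p i) * P0 (estart (es 1))"
  proof -
    have "Pch (y i) (ss (i + 1)) (einput (es i)) (ss i) = p i" if i: "i \<in> {1..n}" for i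
    proof (cases "i < n")
      case True
      then have "eend (es i) = estart (es (i+1))" using p i by (simp add: is_edge_path_def)
      then show ?thesis using True i by (simp add: ss_def p_def)
    next
      case False
      then show ?thesis using i by (simp add: ss_def p_def)
    qed
    then have "(\<Prod>i=1..n. Pch (y i) (ss (i + 1)) (einput (es i)) (ss i)) = (\<Prod>i=1..n. p i)"
      by (intro prod.cong) auto
    moreover have "ss 1 = estart (es 1)" using n by (simp add: ss_def)
    ultimately show ?thesis by (simp add: joint_likelihood_def)
  qed
  moreover have "branch_metric Pch P0 y (es i) = - ln (p i) - (if i = 1 then ln (P0 (estart (es 1))) else 0)"
    if i: "i \<in> {1..n}" for i
    using i pp ppos[OF i] P0pos by (auto simp: branch_metric_def p_def ln_mult)
  then have "(\<Sum>i=1..n. branch_metric Pch P0 y (es i)) = - (\<Sum>i=1..n. ln (p i)) - ln (P0 (estart (es 1)))"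
    using n by (simp add: sum_subtractf sum.delta sum_negf)
  moreover have "(\<Sum>i=1..n. ln (p i)) = ln (\<Prod>i=1..n. p i)"
    using ppos by (subst ln_prod) force+
  moreover have pr: "(\<Prod>i=1..n. p i) > 0" using ppos by (intro prod_pos) auto
  moreover have "ln ((\<Prod>i=1..n. p i) * P0 (estart (es 1))) = ln (\<Prod>i=1..n. p i) + ln (P0 (estart (es 1)))"
  proof -
    have "\<And>a b::real. 0<a \<Longrightarrow> 0<b \<Longrightarrow> ln(a*b) = ln a + ln b" by (simp add: ln_mult)
    then show ?thesis using pr P0pos by blast
  qed
  moreover have "(\<Prod>i=1..n. p i) * P0 (estart (es 1)) > 0" using pr P0pos by simp
  ultimately show ?thesis by (metis minus_diff_eq diff_minus_eq_add add_uminus_conv_diff minus_add_distrib)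
qed

theorem theorem3:
  fixes H :: "nat \<Rightarrow> nat \<Rightarrow> bool" and m n :: nat
    and Pch :: "'y \<Rightarrow> 's::finite \<Rightarrow> bool \<Rightarrow> 's \<Rightarrow> real"
    and P0 :: "'s \<Rightarrow> real"
    and y :: "nat \<Rightarrow> 'y"
    and gstar :: "'s edge \<Rightarrow> real"
  defines "E \<equiv> trellis_edges Pch P0 n y"
  assumes Pch_nonneg: "\<And>y' s' x s. 0 \<le> Pch y' s' x s"
    and P0_nonneg: "\<And>s. 0 \<le> P0 s"
    and P0_sum: "(\<Sum>s\<in>UNIV. P0 s) = 1"
    and opt: "gstar \<in> trellis_relaxed_polytope H m n E"
    and minim: "\<And>g. g \<in> trellis_relaxed_polytope H m n E \<Longrightarrow>
        (\<Sum>e\<in>E. gstar e * branch_metric Pch P0 y e) \<le> (\<Sum>e\<in>E. g e * branch_metric Pch P0 y e)"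
    and integral: "\<And>e. e \<in> E \<Longrightarrow> gstar e \<in> {0, 1}"
  shows "\<exists>es. is_edge_path E n es \<and>
           (\<forall>e. gstar e = (if e \<in> es ` {1..n} then 1 else 0)) \<and>
           (\<lambda>i. einput (es i)) \<in> code H m n \<and>
           (let xs = (\<lambda>i. einput (es i));
                ss = (\<lambda>i. if i \<le> n then estart (es i) else eend (es n))
            in \<forall>x' ss'. x' \<in> code H m n \<longrightarrow>
                 joint_likelihood Pch P0 n y x' ss' \<le> joint_likelihood Pch P0 n y xs ss)"
proof -
  have finE: "finite E" unfolding E_def by (rule finE)
  note memE' = memE[of _ Pch P0 n y, folded E_def]
  have tp: "gstar \<in> trellis_polytope E n" using opt by (simp add: trellis_relaxed_polytope_def)
  have zero: "\<And>e. e \<notin> E \<Longrightarrow> gstar e = 0" using tp unfolding trellis_polytope_def mem_Collect_eq by blast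
  have nonneg: "\<And>e. 0 \<le> gstar e" using integral zero by (metis empty_iff insert_iff order_refl zero_le_one)
  have t1: "(\<Sum>e\<in>{e\<in>E. etime e = 1}. gstar e) = 1" using tp by (simp add: trellis_polytope_def)
  have cons: "\<And>i j. i \<in> {1..n-1} \<Longrightarrow> (\<Sum>e\<in>{e\<in>E. etime e = i \<and> eend e = j}. gstar e) =
        (\<Sum>e\<in>{e\<in>E. etime e = i + 1 \<and> estart e = j}. gstar e)"
    using tp by (simp add: trellis_polytope_def)
  have n1: "1 \<le> n"
  proof (rule ccontr)
    assume "\<not> 1 \<le> n"
    then have "{e\<in>E. etime e = 1} = {}" using memE' by auto
    then show False using t1 by (simp del: Collect_empty_eq)
  qed
  have tot: "(\<Sum>e\<in>{e\<in>E. etime e = 1 + k}. gstar e) = 1" if "1 + k \<le> n" for k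
    using that
  proof (induction k)
    case 0 then show ?case using t1 by simp
  next
    case (Suc k)
    let ?i = "1 + k"
    have i: "?i \<in> {1..n-1}" using Suc.prems by auto
    have "(\<Sum>e\<in>{e\<in>E. etime e = 1 + Suc k}. gstar e) =
        (\<Sum>j\<in>UNIV. \<Sum>e\<in>{e \<in> {e\<in>E. etime e = 1 + Suc k}. estart e = j}. gstar e)"
      using finE by (intro sum.group[symmetric]) auto
    also have "\<dots> = (\<Sum>j\<in>UNIV. \<Sum>e\<in>{e\<in>E. etime e = ?i + 1 \<and> estart e = j}. gstar e)"
      by (intro sum.cong) (auto intro!: sum.cong)
    also have "\<dots> = (\<Sum>j\<in>UNIV. \<Sum>e\<in>{e\<in>E. etime e = ?i \<and> eend e = j}. gstar e)"
      using cons[OF i] by simp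
    also have "\<dots> = (\<Sum>j\<in>UNIV. \<Sum>e\<in>{e \<in> {e\<in>E. etime e = ?i}. eend e = j}. gstar e)"
      by (intro sum.cong) (auto intro!: sum.cong)
    also have "\<dots> = (\<Sum>e\<in>{e\<in>E. etime e = ?i}. gstar e)"
      using finE by (intro sum.group) auto
    also have "\<dots> = 1" using Suc by simp
    finally show ?case .
  qed
  have card1: "card {e\<in>E. etime e = i \<and> gstar e = 1} = 1" if i: "i \<in> {1..n}" for i
  proof -
    have "(\<Sum>e\<in>{e\<in>E. etime e = i}. gstar e) = 1" using tot[of "i - 1"] i by simp
    moreover have "(\<Sum>e\<in>{e\<in>E. etime e = i}. gstar e) = real (card {e\<in>{e\<in>E. etime e = i}. gstar e = 1})"
      using finE integral by (intro sum01) auto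
    moreover have "{e\<in>{e\<in>E. etime e = i}. gstar e = 1} = {e\<in>E. etime e = i \<and> gstar e = 1}" by auto
    ultimately show ?thesis by simp
  qed
  define es where "es i = the_elem {e\<in>E. etime e = i \<and> gstar e = 1}" for i
  have U: "{e\<in>E. etime e = i \<and> gstar e = 1} = {es i}" if i: "i \<in> {1..n}" for i
  proof -
    obtain a where "{e\<in>E. etime e = i \<and> gstar e = 1} = {a}" using card1[OF i] card_1_singletonE by blast
    then show ?thesis by (simp add: es_def)
  qed
  have esp: "es i \<in> E \<and> etime (es i) = i \<and> gstar (es i) = 1" if i: "i \<in> {1..n}" for i
    using U[OF i] by blast
  have conn: "eend (es i) = estart (es (i + 1))" if i: "i \<in> {1..n-1}" for i
  proof -
    let ?j = "eend (es i)"
    have "1 \<le> (\<Sum>e\<in>{e\<in>E. etime e = i \<and> eend e = ?j}. gstar e)"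
      using esp[of i] i finE nonneg by (intro member_le_sum[where i="es i", THEN order_trans[rotated]]) auto
    then have ge: "1 \<le> (\<Sum>e\<in>{e\<in>E. etime e = i + 1 \<and> estart e = ?j}. gstar e)" using cons[OF i] by simp
    have "\<exists>e\<in>{e\<in>E. etime e = i + 1 \<and> estart e = ?j}. gstar e = 1"
    proof (rule ccontr)
      assume "\<not> ?thesis"
      then have "\<forall>e\<in>{e\<in>E. etime e = i + 1 \<and> estart e = ?j}. gstar e = 0" using integral by blast
      then have "(\<Sum>e\<in>{e\<in>E. etime e = i + 1 \<and> estart e = ?j}. gstar e) = 0" by (rule sum.neutral)
      then show False using ge by simp
    qed
    then obtain e where e: "e \<in> E" "etime e = i + 1" "estart e = ?j" "gstar e = 1" by blast
    have "i + 1 \<in> {1..n}" using i by auto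
    then have "e = es (i + 1)" using U[of "i+1"] e by blast
    then show ?thesis using e by simp
  qed
  have path: "is_edge_path E n es" using esp conn by (simp add: is_edge_path_def)
  have pp: "\<forall>i\<in>{1..n}. es i \<in> E \<and> etime (es i) = i" using esp by simp
  have geq: "\<forall>e. gstar e = ind es n e"
  proof
    fix e
    show "gstar e = ind es n e"
    proof (cases "e \<in> E")
      case False
      then show ?thesis using zero pp by auto
    next
      case True
      then have ti: "etime e \<in> {1..n}" using memE' by simp
      show ?thesis
      proof (cases "gstar e = 1")
        case True
        then have "e = es (etime e)" using U[OF ti] \<open>e \<in> E\<close> by blast
        then show ?thesis using True ti by auto
      next
        case False
        then have "gstar e = 0" using integral \<open>e \<in> E\<close> by blast
        moreover have "e \<notin> es ` {1..n}" using esp False by auto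
        ultimately show ?thesis by simp
      qed
    qed
  qed
  have gind: "gstar = ind es n" using geq by auto
  have code: "(\<lambda>i. einput (es i)) \<in> code H m n"
  proof -
    have "projQ E gstar \<in> relaxed_polytope H m n" using opt by (simp add: trellis_relaxed_polytope_def)
    moreover have "\<forall>i\<in>{1..n}. projQ E gstar i = (if einput (es i) then 1 else 0)"
      using ind_sub[OF finE pp, of _ einput] gind by (simp add: projQ_def)
    ultimately show ?thesis by (rule relaxed_code)
  qed
  define ss where "ss = (\<lambda>i. if i \<le> n then estart (es i) else eend (es n))"
  have L: "joint_likelihood Pch P0 n y (\<lambda>i. einput (es i)) ss > 0 \<and>
    (\<Sum>i=1..n. branch_metric Pch P0 y (es i)) = - ln (joint_likelihood Pch P0 n y (\<lambda>i. einput (es i)) ss)"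
    using lik[OF n1 path[unfolded E_def]] unfolding ss_def .
  have cost: "(\<Sum>e\<in>E. gstar e * branch_metric Pch P0 y e) = (\<Sum>i=1..n. branch_metric Pch P0 y (es i))"
    using ind_sum[OF finE pp] gind by simp
  have mlb: "joint_likelihood Pch P0 n y x' ss' \<le> joint_likelihood Pch P0 n y (\<lambda>i. einput (es i)) ss"
    if x': "x' \<in> code H m n" for x' ss'
  proof (cases "joint_likelihood Pch P0 n y x' ss' > 0")
    case False
    then show ?thesis using L by simp
  next
    case True
    have prnn: "0 \<le> (\<Prod>i=1..n. Pch (y i) (ss' (i + 1)) (x' i) (ss' i))"
      using Pch_nonneg by (intro prod_nonneg) auto
    have P0p: "P0 (ss' 1) > 0" using True prnn P0_nonneg[of "ss' 1"]
      unfolding joint_likelihood_def by (metis less_eq_real_def mult_zero_right)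
    have prp: "(\<Prod>i=1..n. Pch (y i) (ss' (i + 1)) (x' i) (ss' i)) \<noteq> 0"
      using True unfolding joint_likelihood_def by (metis less_irrefl mult_zero_left)
    have fp: "Pch (y i) (ss' (i + 1)) (x' i) (ss' i) > 0" if "i \<in> {1..n}" for i
    proof -
      have "Pch (y i) (ss' (i + 1)) (x' i) (ss' i) \<noteq> 0" using prp that by auto
      then show ?thesis using Pch_nonneg[of "y i" "ss' (i+1)" "x' i" "ss' i"] by linarith
    qed
    define es' where "es' i = (i, ss' i, ss' (i + 1), x' i)" for i
    have sel: "etime (es' i) = i" "estart (es' i) = ss' i" "eend (es' i) = ss' (i+1)" "einput (es' i) = x' i" for i
      by (simp_all add: es'_def etime_def estart_def eend_def einput_def)
    have path': "is_edge_path E n es'"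
      unfolding is_edge_path_def using fp P0p by (auto simp: memE' sel)
    have pp': "\<forall>i\<in>{1..n}. es' i \<in> E \<and> etime (es' i) = i" using path' by (simp add: is_edge_path_def)
    have xe: "(\<lambda>i. einput (es' i)) = x'" by (simp add: sel)
    have inpoly: "ind es' n \<in> trellis_relaxed_polytope H m n E"
      using path_in_poly[OF n1 finE path'] x' xe by simp
    define ss'' where "ss'' = (\<lambda>i. if i \<le> n then estart (es' i) else eend (es' n))"
    have L': "joint_likelihood Pch P0 n y (\<lambda>i. einput (es' i)) ss'' > 0 \<and>
      (\<Sum>i=1..n. branch_metric Pch P0 y (es' i)) = - ln (joint_likelihood Pch P0 n y (\<lambda>i. einput (es' i)) ss'')"
      using lik[OF n1 path'[unfolded E_def]] unfolding ss''_def .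
    have "joint_likelihood Pch P0 n y (\<lambda>i. einput (es' i)) ss'' = joint_likelihood Pch P0 n y x' ss'"
    proof -
      have "(\<Prod>i=1..n. Pch (y i) (ss'' (i + 1)) (x' i) (ss'' i)) = (\<Prod>i=1..n. Pch (y i) (ss' (i + 1)) (x' i) (ss' i))"
      proof (intro prod.cong refl)
        fix i assume "i \<in> {1..n}"
        then have "i < n \<or> i = n" by auto
        then show "Pch (y i) (ss'' (i + 1)) (x' i) (ss'' i) = Pch (y i) (ss' (i + 1)) (x' i) (ss' i)"
          using \<open>i \<in> {1..n}\<close> by (auto simp: ss''_def sel)
      qed
      moreover have "ss'' 1 = ss' 1" using n1 by (simp add: ss''_def sel)
      ultimately show ?thesis by (simp add: joint_likelihood_def xe)
    qed
    moreover have cost': "(\<Sum>e\<in>E. ind es' n e * branch_metric Pch P0 y e) = (\<Sum>i=1..n. branch_metric Pch P0 y (es' i))"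
      using ind_sum[OF finE pp'] .
    moreover have "(\<Sum>e\<in>E. gstar e * branch_metric Pch P0 y e) \<le> (\<Sum>e\<in>E. ind es' n e * branch_metric Pch P0 y e)"
      using minim[OF inpoly] .
    ultimately have "- ln (joint_likelihood Pch P0 n y (\<lambda>i. einput (es i)) ss) \<le> - ln (joint_likelihood Pch P0 n y x' ss')"
      using L L' cost by simp
    then show ?thesis using L True by simp
  qed
  show ?thesis
    apply (rule exI[of _ es])
    using path geq code mlb unfolding ss_def Let_def by auto
qed

end
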